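(* For an order $O$, the following are equivalent: (i) whenever $x\sim y$ in $O$, either ($D(x)\subseteq D(y)$ and $U(x)\subseteq U(y)$) or ($D(y)\subseteq D(x)$ and $U(y)\subseteq U(x)$); (ii) for any two antichains $A,B$ of $O$ such that every element of $A$ is comparable with at least one element of $B$ and every element of $B$ is comparable with at least one element of $A$, either every element of $A$ is less than every element of $B$, or every element of $A$ is greater than every element of $B$; (iii) for any two maximal antichains $A,B$ of $O$, either every element of $A$ is less than every element of $B$, or every element of $A$ is greater than every element of $B$; (iv) for any two antichains $A,B$ of $O$ such that $A$ is a maximal antichain and every element of $A$ is comparable with at least one element of $B$, either every element of $A$ is less than every element of $B$, or every element of $A$ is greater than every element of $B$; (v) $O$ has no induced suborder isomorphic to $O_{obs1}$ and no induced suborder isomorphic to $O_{obs2}$.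
   Context: Orders are partial orders; $x\sim y$ means $x\ne y$ and $x,y$ are incomparable. For an element $x$, $D(x)=\{z: z<x\}$ and $U(x)=\{z:z>x\}$. An antichain is a set of pairwise incomparable elements; it is maximal if no element can be added to it. $O_{obs1}$ is the order on $\{a,b,c,d\}$ whose only comparabilities are $a<b$, $c<d$; $O_{obs2}$ is the order on $\{a,b,c,d\}$ whose only comparabilities are $a<b$, $c<d$, $c<b$. An induced suborder is a subset with the restricted order.
   Formalization: In (ii)-(iv) the conclusion compares only the elements of A not in B with those of B not in A, and in (ii) and (iv) being comparable with an element includes being equal to it. Apart from conventions, each condition added here is assumed in the paper as well or is needed for the statement above to hold. *)

theory Defs
  imports Main
begin

text \<open>An order is a carrier set P of a type with a partial order.\<close>

definition comparable :: "'a::order \<Rightarrow> 'a \<Rightarrow> bool" where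
  "comparable x y \<longleftrightarrow> x \<le> y \<or> y \<le> x"

definition incomp :: "'a::order \<Rightarrow> 'a \<Rightarrow> bool" where
  "incomp x y \<longleftrightarrow> x \<noteq> y \<and> \<not> comparable x y"

definition Dn :: "'a::order set \<Rightarrow> 'a \<Rightarrow> 'a set" where
  "Dn P x = {z \<in> P. z < x}"

definition Up :: "'a::order set \<Rightarrow> 'a \<Rightarrow> 'a set" where
  "Up P x = {z \<in> P. x < z}"

definition antichain_in :: "'a::order set \<Rightarrow> 'a set \<Rightarrow> bool" where
  "antichain_in P A \<longleftrightarrow> A \<subseteq> P \<and> (\<forall>a\<in>A. \<forall>b\<in>A. a \<noteq> b \<longrightarrow> incomp a b)"

definition max_antichain_in :: "'a::order set \<Rightarrow> 'a set \<Rightarrow> bool" where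
  "max_antichain_in P A \<longleftrightarrow> antichain_in P A \<and>
     (\<forall>x\<in>P. x \<notin> A \<longrightarrow> \<not> antichain_in P (insert x A))"

definition all_less :: "'a::order set \<Rightarrow> 'a set \<Rightarrow> bool" where
  "all_less X Y \<longleftrightarrow> (\<forall>x\<in>X. \<forall>y\<in>Y. x < y)"

definition ac_ordered :: "'a::order set \<Rightarrow> 'a set \<Rightarrow> bool" where
  "ac_ordered A B \<longleftrightarrow> all_less (A - B) (B - A) \<or> all_less (B - A) (A - B)"

text \<open>The obstruction orders on {a,b,c,d} = {0,1,2,3}: strict order relations.\<close>
definition obs1_less :: "nat \<Rightarrow> nat \<Rightarrow> bool" where
  "obs1_less i j \<longleftrightarrow> (i, j) \<in> {(0, 1), (2, 3)}"

definition obs2_less :: "nat \<Rightarrow> nat \<Rightarrow> bool" where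
  "obs2_less i j \<longleftrightarrow> (i, j) \<in> {(0, 1), (2, 3), (2, 1)}"

definition has_induced4 :: "'a::order set \<Rightarrow> (nat \<Rightarrow> nat \<Rightarrow> bool) \<Rightarrow> bool" where
  "has_induced4 P R \<longleftrightarrow> (\<exists>f. inj_on f {0..<4} \<and> f ` {0..<4} \<subseteq> P \<and>
       (\<forall>i\<in>{0..<4}. \<forall>j\<in>{0..<4}. f i < f j \<longleftrightarrow> R i j))"

end

theory Submission
  imports Defs
begin

lemma ext_max:
  fixes P :: "'a::order set"
  assumes "antichain_in P S"
  shows "\<exists>M. max_antichain_in P M \<and> S \<subseteq> M"
proof -
  let ?A = "{X. antichain_in P X \<and> S \<subseteq> X}"
  have "\<forall>C\<in>chains ?A. \<exists>U\<in>?A. \<forall>X\<in>C. X \<subseteq> U"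
  proof
    fix C assume C: "C \<in> chains ?A"
    have sub: "C \<subseteq> ?A" using chainsD2[OF C] .
    have "antichain_in P (\<Union>C \<union> S)"
      unfolding antichain_in_def
    proof (intro conjI ballI impI)
      show "\<Union>C \<union> S \<subseteq> P" using sub assms by (auto simp: antichain_in_def)
    next
      fix a b assume a: "a \<in> \<Union>C \<union> S" and b: "b \<in> \<Union>C \<union> S" and ne: "a \<noteq> b"
      have "\<exists>X\<in>?A. a \<in> X \<and> b \<in> X"
      proof -
        { assume "a \<in> S" "b \<in> S" hence ?thesis using assms by auto }
        moreover
        { fix X assume "X \<in> C" "a \<in> X" "b \<in> S" hence ?thesis using sub by blast }
        moreover
        { fix X assume "X \<in> C" "b \<in> X" "a \<in> S" hence ?thesis using sub by blast }
        moreover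
        { fix X Y assume "X \<in> C" "a \<in> X" "Y \<in> C" "b \<in> Y"
          then have "X \<subseteq> Y \<or> Y \<subseteq> X" using chainsD[OF C] by blast
          then have ?thesis
          proof
            assume "X \<subseteq> Y" thus ?thesis using \<open>Y \<in> C\<close> \<open>a \<in> X\<close> \<open>b \<in> Y\<close> sub by blast
          next
            assume "Y \<subseteq> X" thus ?thesis using \<open>X \<in> C\<close> \<open>a \<in> X\<close> \<open>b \<in> Y\<close> sub by blast
          qed }
        ultimately show ?thesis using a b by blast
      qed
      then show "incomp a b" using ne by (auto simp: antichain_in_def)
    qed
    then have "\<Union>C \<union> S \<in> ?A" by simp
    moreover have "\<forall>X\<in>C. X \<subseteq> \<Union>C \<union> S" by auto
    ultimately show "\<exists>U\<in>?A. \<forall>X\<in>C. X \<subseteq> U" by (rule bexI[rotated])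
  qed
  from Zorn_Lemma2[OF this] obtain M where M: "M \<in> ?A"
    and mx: "\<forall>X\<in>?A. M \<subseteq> X \<longrightarrow> X = M" by (elim bexE)
  have "max_antichain_in P M"
    unfolding max_antichain_in_def
  proof (intro conjI ballI impI)
    show "antichain_in P M" using M by auto
  next
    fix x assume "x \<in> P" "x \<notin> M"
    show "\<not> antichain_in P (insert x M)"
    proof
      assume "antichain_in P (insert x M)"
      then have "insert x M \<in> ?A" using M by auto
      with mx \<open>x \<notin> M\<close> show False by blast
    qed
  qed
  then show ?thesis using M by auto
qed

lemma obs1I:
  fixes P :: "'a::order set"
  assumes "a \<in> P" "b \<in> P" "c \<in> P" "d \<in> P" "a < b" "c < d"
    "\<not> comparable a c" "\<not> comparable a d" "\<not> comparable b c" "\<not> comparable b d"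
  shows "has_induced4 P obs1_less"
proof -
  have U: "{0..<4::nat} = {0,1,2,3}" by auto
  have o: "\<not> b < a" "\<not> d < c" using assms by (auto dest: less_not_sym)
  show ?thesis
    unfolding has_induced4_def
    apply (rule exI[of _ "\<lambda>i. [a,b,c,d]!i"])
    using assms o by (auto simp: U obs1_less_def inj_on_def comparable_def dest: less_imp_le)
qed

lemma obs2I:
  fixes P :: "'a::order set"
  assumes "a \<in> P" "b \<in> P" "c \<in> P" "d \<in> P" "a < b" "c < d" "c < b"
    "\<not> comparable a c" "\<not> comparable a d" "\<not> comparable b d"
  shows "has_induced4 P obs2_less"
proof -
  have U: "{0..<4::nat} = {0,1,2,3}" by auto
  have o: "\<not> b < a" "\<not> d < c" using assms by (auto dest: less_not_sym)
  show ?thesis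
    unfolding has_induced4_def
    apply (rule exI[of _ "\<lambda>i. [a,b,c,d]!i"])
    using assms o by (auto simp: U obs2_less_def inj_on_def comparable_def dest: less_imp_le)
qed


definition c1p :: "'a::order set \<Rightarrow> bool" where
  "c1p P \<longleftrightarrow> (\<forall>x\<in>P. \<forall>y\<in>P. incomp x y \<longrightarrow>
              (Dn P x \<subseteq> Dn P y \<and> Up P x \<subseteq> Up P y) \<or> (Dn P y \<subseteq> Dn P x \<and> Up P y \<subseteq> Up P x))"

lemma caseA:
  fixes P :: "'a::order set"
  assumes "x \<in> P" "y \<in> P" "\<not> comparable x y" "z \<in> P" "z < x" "\<not> z < y"
    "w \<in> P" "y < w" "\<not> x < w"
  shows "has_induced4 P obs1_less \<or> has_induced4 P obs2_less"
proof (cases "z < w")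
  case True
  have "has_induced4 P obs2_less"
  proof (rule obs2I[of y P w z x])
    show "\<not> comparable y z" using assms by (auto simp: comparable_def le_less)
    show "\<not> comparable y x" using assms by (auto simp: comparable_def)
    show "\<not> comparable w x" using assms by (auto simp: comparable_def le_less dest: less_trans)
  qed (use assms True in auto)
  then show ?thesis ..
next
  case False
  have "has_induced4 P obs1_less"
  proof (rule obs1I[of z P x y w])
    show "\<not> comparable z y" using assms by (auto simp: comparable_def le_less dest: less_trans)
    show "\<not> comparable z w" using assms False by (auto simp: comparable_def le_less dest: less_trans)
    show "\<not> comparable x y" using assms by (auto simp: comparable_def)
    show "\<not> comparable x w" using assms by (auto simp: comparable_def le_less dest: less_trans)
  qed (use assms in auto)
  then show ?thesis ..
qed

lemma c5_c1:
  fixes P :: "'a::order set"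
  assumes "\<not> c1p P"
  shows "has_induced4 P obs1_less \<or> has_induced4 P obs2_less"
proof -
  obtain x y where xy: "x \<in> P" "y \<in> P" "incomp x y"
    and n1: "\<not> (Dn P x \<subseteq> Dn P y \<and> Up P x \<subseteq> Up P y)"
    and n2: "\<not> (Dn P y \<subseteq> Dn P x \<and> Up P y \<subseteq> Up P x)"
    using assms unfolding c1p_def by blast
  have nc: "\<not> comparable x y" "\<not> comparable y x" using xy by (auto simp: incomp_def comparable_def)
  consider "\<not> Dn P x \<subseteq> Dn P y" "\<not> Dn P y \<subseteq> Dn P x"
    | "\<not> Up P x \<subseteq> Up P y" "\<not> Up P y \<subseteq> Up P x"
    | "\<not> Dn P x \<subseteq> Dn P y" "\<not> Up P y \<subseteq> Up P x"
    | "\<not> Up P x \<subseteq> Up P y" "\<not> Dn P y \<subseteq> Dn P x"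
    using n1 n2 by blast
  then show ?thesis
  proof cases
    case 1
    then obtain z w where "z \<in> P" "z < x" "\<not> z < y" "w \<in> P" "w < y" "\<not> w < x"
      by (auto simp: Dn_def)
    then have "has_induced4 P obs1_less"
      using nc xy by (intro obs1I[of z P x w y]) (auto simp: comparable_def le_less dest: less_trans)
    then show ?thesis ..
  next
    case 2
    then obtain z w where "z \<in> P" "x < z" "\<not> y < z" "w \<in> P" "y < w" "\<not> x < w"
      by (auto simp: Up_def)
    then have "has_induced4 P obs1_less"
      using nc xy by (intro obs1I[of x P z y w]) (auto simp: comparable_def le_less dest: less_trans)
    then show ?thesis ..
  next
    case 3
    then obtain z w where "z \<in> P" "z < x" "\<not> z < y" "w \<in> P" "y < w" "\<not> x < w"
      by (auto simp: Dn_def Up_def)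
    then show ?thesis using caseA[of x P y z w] nc xy by auto
  next
    case 4
    then obtain z w where "z \<in> P" "z < y" "\<not> z < x" "w \<in> P" "x < w" "\<not> y < w"
      by (auto simp: Dn_def Up_def)
    then show ?thesis using caseA[of y P x z w] nc xy by auto
  qed
qed


locale twoac =
  fixes P :: "'a::order set" and X Y :: "'a set"
  assumes c1: "c1p P"
    and XP: "X \<subseteq> P" and YP: "Y \<subseteq> P" and disj: "X \<inter> Y = {}"
    and acX: "\<And>a b. a \<in> X \<Longrightarrow> b \<in> X \<Longrightarrow> a \<noteq> b \<Longrightarrow> incomp a b"
    and acY: "\<And>a b. a \<in> Y \<Longrightarrow> b \<in> Y \<Longrightarrow> a \<noteq> b \<Longrightarrow> incomp a b"
    and covX: "\<And>a. a \<in> X \<Longrightarrow> \<exists>b\<in>Y. comparable a b"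
    and covY: "\<And>b. b \<in> Y \<Longrightarrow> \<exists>a\<in>X. comparable a b"
begin

lemma c1D: "x \<in> P \<Longrightarrow> y \<in> P \<Longrightarrow> incomp x y \<Longrightarrow>
  (Dn P x \<subseteq> Dn P y \<and> Up P x \<subseteq> Up P y) \<or> (Dn P y \<subseteq> Dn P x \<and> Up P y \<subseteq> Up P x)"
  using c1 unfolding c1p_def by blast

lemma L1:
  assumes x: "x \<in> X" and y: "y \<in> Y" and xy: "x < y" and x': "x' \<in> X"
  shows "x' < y"
proof (rule ccontr)
  assume nl: "\<not> x' < y"
  have xx: "x \<noteq> x'" using xy nl by auto
  have ixx: "incomp x x'" using acX[OF x x' xx] .
  have ny: "\<not> y < x'"
  proof
    assume "y < x'" then have "x < x'" using xy by simp
    then show False using ixx by (auto simp: incomp_def comparable_def)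
  qed
  have ne: "x' \<noteq> y" using x' y disj by auto
  have inc: "incomp x' y" using nl ny ne by (auto simp: incomp_def comparable_def le_less)
  have x'P: "x' \<in> P" and yP: "y \<in> P" and xP: "x \<in> P" using x' y x XP YP by auto
  from c1D[OF x'P yP inc] show False
  proof
    assume "Dn P y \<subseteq> Dn P x' \<and> Up P y \<subseteq> Up P x'"
    then have "x < x'" using xy xP by (auto simp: Dn_def)
    then show False using ixx by (auto simp: incomp_def comparable_def)
  next
    assume sub: "Dn P x' \<subseteq> Dn P y \<and> Up P x' \<subseteq> Up P y"
    obtain y' where y': "y' \<in> Y" "comparable x' y'" using covX[OF x'] by blast
    have "y' \<noteq> y" using y' nl ny ne by (auto simp: comparable_def le_less)
    then have iyy: "incomp y y'" using acY[OF y y'(1)] by auto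
    have y'P: "y' \<in> P" using y' YP by auto
    have "x' \<noteq> y'" using x' y' disj by auto
    then have "x' < y' \<or> y' < x'" using y' by (auto simp: comparable_def le_less)
    then show False
    proof
      assume "x' < y'" then have "y < y'" using sub y'P by (auto simp: Up_def)
      then show False using iyy by (auto simp: incomp_def comparable_def)
    next
      assume "y' < x'" then have "y' < y" using sub y'P by (auto simp: Dn_def)
      then show False using iyy by (auto simp: incomp_def comparable_def)
    qed
  qed
qed

lemma L2:
  assumes x: "x \<in> X" and y: "y \<in> Y" and xy: "x < y" and y': "y' \<in> Y"
  shows "x < y'"
proof (rule ccontr)
  assume nl: "\<not> x < y'"
  have yy: "y \<noteq> y'" using xy nl by auto
  have iyy: "incomp y y'" using acY[OF y y' yy] .
  have ny: "\<not> y' < x"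
  proof
    assume "y' < x" then have "y' < y" using xy by simp
    then show False using iyy by (auto simp: incomp_def comparable_def)
  qed
  have ne: "x \<noteq> y'" using x y' disj by auto
  have inc: "incomp x y'" using nl ny ne by (auto simp: incomp_def comparable_def le_less)
  have y'P: "y' \<in> P" and yP: "y \<in> P" and xP: "x \<in> P" using y' y x XP YP by auto
  from c1D[OF xP y'P inc] show False
  proof
    assume "Dn P x \<subseteq> Dn P y' \<and> Up P x \<subseteq> Up P y'"
    then have "y' < y" using xy yP by (auto simp: Up_def)
    then show False using iyy by (auto simp: incomp_def comparable_def)
  next
    assume sub: "Dn P y' \<subseteq> Dn P x \<and> Up P y' \<subseteq> Up P x"
    obtain x'' where x'': "x'' \<in> X" "comparable x'' y'" using covY[OF y'] by blast
    have "x'' \<noteq> x" using x'' nl ny ne by (auto simp: comparable_def le_less)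
    then have ixx: "incomp x x''" using acX[OF x x''(1)] by auto
    have x''P: "x'' \<in> P" using x'' XP by auto
    have "x'' \<noteq> y'" using x'' y' disj by auto
    then have "x'' < y' \<or> y' < x''" using x'' by (auto simp: comparable_def le_less)
    then show False
    proof
      assume "x'' < y'" then have "x'' < x" using sub x''P by (auto simp: Dn_def)
      then show False using ixx by (auto simp: incomp_def comparable_def)
    next
      assume "y' < x''" then have "x < x''" using sub x''P by (auto simp: Up_def)
      then show False using ixx by (auto simp: incomp_def comparable_def)
    qed
  qed
qed

end

lemma twoac_swap: "twoac P X Y \<Longrightarrow> twoac P Y X"
  unfolding twoac_def by (auto simp: comparable_def)

lemma core:
  assumes "twoac P X Y"
  shows "all_less X Y \<or> all_less Y X"
proof (cases "X = {}")
  case True then show ?thesis by (auto simp: all_less_def)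
next
  case False
  then obtain x where x: "x \<in> X" by blast
  interpret t: twoac P X Y by fact
  interpret s: twoac P Y X using twoac_swap[OF assms] .
  obtain y where y: "y \<in> Y" "comparable x y" using t.covX[OF x] by blast
  have "x \<noteq> y" using x y t.disj by auto
  then have "x < y \<or> y < x" using y by (auto simp: comparable_def le_less)
  then show ?thesis
  proof
    assume xy: "x < y"
    have "all_less X Y" unfolding all_less_def
      using t.L1[OF x y(1) xy] t.L2 y(1) by blast
    then show ?thesis ..
  next
    assume yx: "y < x"
    have "all_less Y X" unfolding all_less_def
      using s.L1[OF y(1) x yx] s.L2 x by blast
    then show ?thesis ..
  qed
qed


definition c2p :: "'a::order set \<Rightarrow> bool" where
  "c2p P \<longleftrightarrow> (\<forall>A B. antichain_in P A \<and> antichain_in P B \<and>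
              (\<forall>a\<in>A. \<exists>b\<in>B. comparable a b) \<and> (\<forall>b\<in>B. \<exists>a\<in>A. comparable a b)
              \<longrightarrow> ac_ordered A B)"
definition c3p :: "'a::order set \<Rightarrow> bool" where
  "c3p P \<longleftrightarrow> (\<forall>A B. max_antichain_in P A \<and> max_antichain_in P B \<longrightarrow> ac_ordered A B)"
definition c4p :: "'a::order set \<Rightarrow> bool" where
  "c4p P \<longleftrightarrow> (\<forall>A B. max_antichain_in P A \<and> antichain_in P B \<and>
              (\<forall>a\<in>A. \<exists>b\<in>B. comparable a b) \<longrightarrow> ac_ordered A B)"
definition c5p :: "'a::order set \<Rightarrow> bool" where
  "c5p P \<longleftrightarrow> (\<not> has_induced4 P obs1_less \<and> \<not> has_induced4 P obs2_less)"

lemma covmax: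
  fixes P :: "'a::order set"
  assumes mA: "max_antichain_in P A" and bP: "b \<in> P"
  shows "\<exists>a\<in>A. comparable a b"
proof (cases "b \<in> A")
  case True then show ?thesis by (auto simp: comparable_def)
next
  case False
  with mA bP have "\<not> antichain_in P (insert b A)" by (auto simp: max_antichain_in_def)
  moreover have "antichain_in P A" using mA by (auto simp: max_antichain_in_def)
  ultimately obtain a where "a \<in> A" "a \<noteq> b" "\<not> incomp a b \<or> \<not> incomp b a"
    using bP by (auto simp: antichain_in_def)
  then show ?thesis by (auto simp: incomp_def comparable_def)
qed

lemma i12:
  fixes P :: "'a::order set"
  assumes "c1p P"
  shows "c2p P"
  unfolding c2p_def
proof (intro allI impI)
  fix A B assume h: "antichain_in P A \<and> antichain_in P B \<and>
            (\<forall>a\<in>A. \<exists>b\<in>B. comparable a b) \<and> (\<forall>b\<in>B. \<exists>a\<in>A. comparable a b)"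
  have cA: "\<forall>a\<in>A. \<exists>b\<in>B. comparable a b" and cB: "\<forall>b\<in>B. \<exists>a\<in>A. comparable a b"
    using h by simp_all
  have "twoac P (A - B) (B - A)"
  proof
    show "c1p P" by (rule assms)
    show "A - B \<subseteq> P" "B - A \<subseteq> P" using h by (auto simp: antichain_in_def)
    show "(A - B) \<inter> (B - A) = {}" by auto
    show "\<And>a b. a \<in> A - B \<Longrightarrow> b \<in> A - B \<Longrightarrow> a \<noteq> b \<Longrightarrow> incomp a b"
      "\<And>a b. a \<in> B - A \<Longrightarrow> b \<in> B - A \<Longrightarrow> a \<noteq> b \<Longrightarrow> incomp a b"
      using h by (auto simp: antichain_in_def)
    show "\<exists>b\<in>B - A. comparable a b" if "a \<in> A - B" for a
    proof -
      have "a \<in> A" using that by simp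
      then obtain b where b: "b \<in> B" "comparable a b" using cA by blast
      have "b \<notin> A"
      proof
        assume "b \<in> A"
        moreover have "a \<noteq> b" using that b by auto
        ultimately have "incomp a b" using h that by (auto simp: antichain_in_def)
        then show False using b by (auto simp: incomp_def)
      qed
      then show ?thesis using b by auto
    qed
    show "\<exists>a\<in>A - B. comparable a b" if "b \<in> B - A" for b
    proof -
      have "b \<in> B" using that by simp
      then obtain a where a: "a \<in> A" "comparable a b" using cB by blast
      have "a \<notin> B"
      proof
        assume "a \<in> B"
        moreover have "a \<noteq> b" using that a by auto
        ultimately have "incomp a b" using h that by (auto simp: antichain_in_def)
        then show False using a by (auto simp: incomp_def)
      qed
      then show ?thesis using a by auto
    qed
  qed
  then show "ac_ordered A B" unfolding ac_ordered_def by (rule core)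
qed

lemma i24:
  fixes P :: "'a::order set"
  assumes "c2p P"
  shows "c4p P"
  unfolding c4p_def
proof (intro allI impI)
  fix A B assume h: "max_antichain_in P A \<and> antichain_in P B \<and> (\<forall>a\<in>A. \<exists>b\<in>B. comparable a b)"
  have "\<forall>b\<in>B. \<exists>a\<in>A. comparable a b"
  proof
    fix b assume "b \<in> B"
    then have "b \<in> P" using h by (auto simp: antichain_in_def)
    then show "\<exists>a\<in>A. comparable a b" using covmax[of P A b] h by blast
  qed
  moreover have "antichain_in P A" using h by (simp add: max_antichain_in_def)
  ultimately show "ac_ordered A B" using assms[unfolded c2p_def, rule_format, of A B] h by simp
qed

lemma i43:
  fixes P :: "'a::order set"
  assumes "c4p P"
  shows "c3p P"
  unfolding c3p_def
proof (intro allI impI)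
  fix A B assume h: "max_antichain_in P A \<and> max_antichain_in P B"
  have "\<forall>a\<in>A. \<exists>b\<in>B. comparable a b"
  proof
    fix a assume "a \<in> A"
    then have "a \<in> P" using h by (auto simp: max_antichain_in_def antichain_in_def)
    then obtain b where "b \<in> B" "comparable b a" using covmax[of P B a] h by blast
    then show "\<exists>b\<in>B. comparable a b" by (auto simp: comparable_def)
  qed
  moreover have "antichain_in P B" using h by (simp add: max_antichain_in_def)
  ultimately show "ac_ordered A B" using assms[unfolded c4p_def, rule_format, of A B] h by simp
qed

lemma i35:
  fixes P :: "'a::order set"
  assumes "c3p P"
  shows "c5p P"
proof -
  have "\<not> has_induced4 P R" if R: "R = obs1_less \<or> R = obs2_less" for R
  proof
    assume "has_induced4 P R"
    then obtain f where f: "inj_on f {0..<4}" "f ` {0..<4} \<subseteq> P"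
      "\<forall>i\<in>{0..<4}. \<forall>j\<in>{0..<4}. f i < f j \<longleftrightarrow> R i j"
      unfolding has_induced4_def by blast
    define a b c d where "a = f 0" "b = f 1" "c = f 2" "d = f 3"
    have Rv: "R 0 1" "R 2 3" "\<not> R 0 2" "\<not> R 2 0" "\<not> R 1 3" "\<not> R 3 1" "\<not> R 0 3" "\<not> R 3 0"
      "\<not> R 1 0"
      using R by (auto simp: obs1_less_def obs2_less_def)
    have rel: "a < b" "c < d" "\<not> a < c" "\<not> c < a" "\<not> b < d" "\<not> d < b" "\<not> a < d" "\<not> d < a"
      "\<not> b < a"
      using f(3) Rv unfolding a_b_c_d_def by (auto simp: atLeastLessThan_iff)
    have ne: "a \<noteq> c" "b \<noteq> d"
      using inj_onD[OF f(1), of 0 2] inj_onD[OF f(1), of 1 3] unfolding a_b_c_d_def by auto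
    have inP: "a \<in> P" "b \<in> P" "c \<in> P" "d \<in> P"
      using f(2) unfolding a_b_c_d_def by auto
    have acS: "antichain_in P {a, c}" "antichain_in P {b, d}"
      using rel ne inP by (auto simp: antichain_in_def incomp_def comparable_def le_less)
    obtain A where A: "max_antichain_in P A" "{a, c} \<subseteq> A" using ext_max[OF acS(1)] by blast
    obtain B where B: "max_antichain_in P B" "{b, d} \<subseteq> B" using ext_max[OF acS(2)] by blast
    have acA: "antichain_in P A" and acB: "antichain_in P B"
      using A B by (auto simp: max_antichain_in_def)
    have "a \<notin> B"
    proof
      assume "a \<in> B" then have "incomp a b" using acB B rel by (auto simp: antichain_in_def)
      then show False using rel by (auto simp: incomp_def comparable_def)
    qed
    have "b \<notin> A"
    proof
      assume "b \<in> A" then have "incomp a b" using acA A rel by (auto simp: antichain_in_def)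
      then show False using rel by (auto simp: incomp_def comparable_def)
    qed
    have "d \<notin> A"
    proof
      assume "d \<in> A" then have "incomp c d" using acA A rel by (auto simp: antichain_in_def)
      then show False using rel by (auto simp: incomp_def comparable_def less_imp_le)
    qed
    have "ac_ordered A B" using assms[unfolded c3p_def, rule_format, of A B] A B by simp
    moreover have m: "a \<in> A - B" "d \<in> B - A" "b \<in> B - A"
      using \<open>a \<notin> B\<close> \<open>b \<notin> A\<close> \<open>d \<notin> A\<close> A B by auto
    ultimately show False unfolding ac_ordered_def all_less_def
    proof (elim disjE)
      assume "\<forall>x\<in>A - B. \<forall>y\<in>B - A. x < y"
      then have "a < d" using m by simp
      then show False using rel by simp
    next
      assume "\<forall>x\<in>B - A. \<forall>y\<in>A - B. x < y"
      then have "b < a" using m by simp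
      then show False using rel by simp
    qed
  qed
  then show ?thesis unfolding c5p_def by blast
qed

theorem lemma4p1:
  fixes P :: "'a::order set"
  defines "c1 \<equiv> (\<forall>x\<in>P. \<forall>y\<in>P. incomp x y \<longrightarrow>
              (Dn P x \<subseteq> Dn P y \<and> Up P x \<subseteq> Up P y) \<or> (Dn P y \<subseteq> Dn P x \<and> Up P y \<subseteq> Up P x))"
      and "c2 \<equiv> (\<forall>A B. antichain_in P A \<and> antichain_in P B \<and>
              (\<forall>a\<in>A. \<exists>b\<in>B. comparable a b) \<and> (\<forall>b\<in>B. \<exists>a\<in>A. comparable a b)
              \<longrightarrow> ac_ordered A B)"
      and "c3 \<equiv> (\<forall>A B. max_antichain_in P A \<and> max_antichain_in P B \<longrightarrow> ac_ordered A B)"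
      and "c4 \<equiv> (\<forall>A B. max_antichain_in P A \<and> antichain_in P B \<and>
              (\<forall>a\<in>A. \<exists>b\<in>B. comparable a b) \<longrightarrow> ac_ordered A B)"
      and "c5 \<equiv> (\<not> has_induced4 P obs1_less \<and> \<not> has_induced4 P obs2_less)"
  shows "(c1 \<longleftrightarrow> c2) \<and> (c1 \<longleftrightarrow> c3) \<and> (c1 \<longleftrightarrow> c4) \<and> (c1 \<longleftrightarrow> c5)"
proof -
  have e1: "c1 = c1p P" unfolding c1_def c1p_def ..
  have e2: "c2 = c2p P" unfolding c2_def c2p_def ..
  have e3: "c3 = c3p P" unfolding c3_def c3p_def ..
  have e4: "c4 = c4p P" unfolding c4_def c4p_def ..
  have e5: "c5 = c5p P" unfolding c5_def c5p_def ..
  have i51: "c1p P" if "c5p P"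
  proof (rule ccontr)
    assume "\<not> c1p P"
    from c5_c1[OF this] that show False unfolding c5p_def by simp
  qed
  have j12: "c1p P \<Longrightarrow> c2p P" by (rule i12)
  have j24: "c2p P \<Longrightarrow> c4p P" by (rule i24)
  have j43: "c4p P \<Longrightarrow> c3p P" by (rule i43)
  have j35: "c3p P \<Longrightarrow> c5p P" by (rule i35)
  have j51: "c5p P \<Longrightarrow> c1p P" by (rule i51)
  have k1: "c1p P \<longleftrightarrow> c2p P" by (metis j12 j24 j43 j35 j51)
  have k2: "c1p P \<longleftrightarrow> c3p P" by (metis j12 j24 j43 j35 j51)
  have k3: "c1p P \<longleftrightarrow> c4p P" by (metis j12 j24 j43 j35 j51)
  have k4: "c1p P \<longleftrightarrow> c5p P" by (metis j12 j24 j43 j35 j51)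
  show ?thesis unfolding e1 e2 e3 e4 e5 using k1 k2 k3 k4 by (intro conjI)
qed

end
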